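(* Let $x\in\Gamma$ be such that $g$ is $C^1$ near $x$, let $x^*\in\mathbb R^n$, let $\lambda\in\Lambda(x,x^* )$ and let $u\in K_\Gamma(x,x^* )$. Then $\langle\mathcal H(x,\lambda)u,u\rangle\ge0$.
   Context: Setting. Let $n,m\ge1$ and let $\mathcal Q:=\{(q_0,q_r)\in\mathbb R\times\mathbb R^m:\|q_r\|\le q_0\}$ be the second-order cone. For $q=(q_0,q_r)\in\mathbb R^{1+m}$ write $\hat q:=(-q_0,q_r)$, and let $\mathcal Q^*:=\{\hat q: q\in\mathcal Q\}=\{(q_0,q_r):\|q_r\|\le-q_0\}$. The normal cone to $\mathcal Q$ at $q\in\mathcal Q$ is $N_{\mathcal Q}(q)=\mathcal Q^*$ if $q=0$, $N_{\mathcal Q}(q)=\{0\}$ if $q\in\operatorname{int}\mathcal Q$, and $N_{\mathcal Q}(q)=\{\alpha\hat q:\alpha\ge0\}$ if $q\in\operatorname{bd}\mathcal Q\setminus\{0\}$. $\Gamma:=\{x\in\mathbb R^n: g(x)\in\mathcal Q\}$ with $g=(g_0,g_r):\mathbb R^n\to\mathbb R\times\mathbb R^m$; $\nabla g(x)$ is the Jacobian and $\nabla g(x)^*$ its transpose. $T_\Gamma(x)$ is the Bouligand tangent cone $\{v:\exists t_k\downarrow0,\ v_k\to v,\ x+t_kv_k\in\Gamma\}$. For $x\in\Gamma$, $x^*\in\mathbb R^n$: $\Lambda(x,x^* ):=\{\lambda\in N_{\mathcal Q}(g(x)):\nabla g(x)^*\lambda=x^*\}$; the critical cone is $K_\Gamma(x,x^*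 ):=\{u\in T_\Gamma(x):\langle x^*,u\rangle=0\}$. The curvature mapping is $\mathcal H(x,\lambda):=\frac{-\lambda_0}{g_0(x)}\big(\nabla g_r(x)^*\nabla g_r(x)-\nabla g_0(x)^*\nabla g_0(x)\big)$ if $g(x)\in\operatorname{bd}\mathcal Q\setminus\{0\}$ and $\mathcal H(x,\lambda):=0$ otherwise. *)

theory Defs
  imports "HOL-Analysis.Analysis"
begin

definition soc :: "(real \<times> (real^'m)) set" where
  "soc = {q. norm (snd q) \<le> fst q}"

definition hat :: "real \<times> (real^'m) \<Rightarrow> real \<times> (real^'m)" where
  "hat q = (- fst q, snd q)"

definition soc_dual :: "(real \<times> (real^'m)) set" where
  "soc_dual = hat ` soc"

text \<open>Normal cone to Q at q (q assumed in Q).\<close>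
definition soc_normal :: "real \<times> (real^'m) \<Rightarrow> (real \<times> (real^'m)) set" where
  "soc_normal q =
     (if q = 0 then soc_dual
      else if q \<in> interior soc then {0}
      else {\<alpha> *\<^sub>R hat q | \<alpha>. \<alpha> \<ge> 0})"

definition Gamma :: "(real^'n \<Rightarrow> real \<times> (real^'m)) \<Rightarrow> (real^'n) set" where
  "Gamma g = {x. g x \<in> soc}"

definition tangent_cone :: "(real^'n) set \<Rightarrow> real^'n \<Rightarrow> (real^'n) set" where
  "tangent_cone S x = {v. \<exists>t w. (\<forall>k. t k > 0) \<and> t \<longlonglongrightarrow> 0 \<and> w \<longlonglongrightarrow> v
                           \<and> (\<forall>k. x + t k *\<^sub>R w k \<in> S)}"

definition C1_near :: "(real^'n \<Rightarrow> real \<times> (real^'m)) \<Rightarrow> real^'n \<Rightarrow> bool" where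
  "C1_near g x = (\<exists>e>0. \<exists>D :: real^'n \<Rightarrow> ((real^'n) \<Rightarrow>\<^sub>L (real \<times> (real^'m))).
       (\<forall>y\<in>ball x e. (g has_derivative blinfun_apply (D y)) (at y)) \<and> continuous_on (ball x e) D)"

definition Lambda :: "(real^'n \<Rightarrow> real \<times> (real^'m)) \<Rightarrow> real^'n \<Rightarrow> real^'n \<Rightarrow> (real \<times> (real^'m)) set" where
  "Lambda g x xs = {l \<in> soc_normal (g x).
       adjoint (frechet_derivative g (at x)) l = xs}"

definition crit_cone :: "(real^'n \<Rightarrow> real \<times> (real^'m)) \<Rightarrow> real^'n \<Rightarrow> real^'n \<Rightarrow> (real^'n) set" where
  "crit_cone g x xs = {u \<in> tangent_cone (Gamma g) x. inner xs u = 0}"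

definition curv :: "(real^'n \<Rightarrow> real \<times> (real^'m)) \<Rightarrow> real^'n \<Rightarrow> real \<times> (real^'m) \<Rightarrow> real^'n \<Rightarrow> real^'n" where
  "curv g x l =
     (if g x \<in> frontier soc - {0} then
        (\<lambda>u. (- fst l / fst (g x)) *\<^sub>R
           (adjoint (\<lambda>v. snd (frechet_derivative g (at x) v)) (snd (frechet_derivative g (at x) u))
          - adjoint (\<lambda>v. fst (frechet_derivative g (at x) v)) (fst (frechet_derivative g (at x) u))))
      else (\<lambda>u. 0))"

end

theory Submission
  imports Defs
begin

lemma open_strict_soc: "open {q :: real \<times> (real^'m). norm (snd q) < fst q}"
  by (rule open_Collect_less) (intro continuous_intros)+

theorem lemma4p1:
  fixes g :: "real^'n \<Rightarrow> real \<times> (real^'m)"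
    and x xs u :: "real^'n" and l :: "real \<times> (real^'m)"
  assumes "x \<in> Gamma g"
    and "C1_near g x"
    and "l \<in> Lambda g x xs"
    and "u \<in> crit_cone g x xs"
  shows "inner (curv g x l u) u \<ge> 0"
proof (cases "g x \<in> frontier soc - {0}")
  case False
  then show ?thesis unfolding curv_def by (simp only: if_False) simp
next
  case True
  define L where "L = frechet_derivative g (at x)"
  obtain e D where e: "e > 0" and D: "\<forall>y\<in>ball x e. (g has_derivative blinfun_apply (D y)) (at y)"
    using assms(2) unfolding C1_near_def by blast
  have "(g has_derivative blinfun_apply (D x)) (at x)" using D e by auto
  hence LD: "L = blinfun_apply (D x)" unfolding L_def using frechet_derivative_at by metis
  have linL: "linear L" unfolding LD by (simp add: blinfun.bounded_linear_right bounded_linear.linear)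
  have lin0: "linear (\<lambda>v. fst (L v))" using linear_compose[OF linL linear_fst] by (simp add: o_def)
  have lin1: "linear (\<lambda>v. snd (L v))" using linear_compose[OF linL linear_snd] by (simp add: o_def)
  define a where "a = fst (g x)"
  define b where "b = snd (g x)"
  define p where "p = fst (L u)"
  define q where "q = snd (L u)"
  have gsoc: "norm b \<le> a" using assms(1) unfolding Gamma_def soc_def a_def b_def by auto
  have gne: "g x \<noteq> 0" using True by auto
  have notint: "g x \<notin> interior soc" using True by (simp add: frontier_def)
  have "{q :: real \<times> (real^'m). norm (snd q) < fst q} \<subseteq> interior soc"
    by (rule interior_maximal[OF _ open_strict_soc]) (auto simp: soc_def)
  hence bnd: "norm b = a" using notint gsoc unfolding a_def b_def by force
  have apos: "a > 0"
  proof (rule ccontr)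
    assume "\<not> a > 0"
    hence "a = 0" "b = 0" using bnd norm_ge_zero[of b] by auto
    hence "g x = 0" unfolding a_def b_def by (simp add: prod_eq_iff)
    with gne show False by simp
  qed
  have "l \<in> soc_normal (g x)" using assms(3) unfolding Lambda_def by auto
  then obtain \<alpha> where al: "\<alpha> \<ge> 0" "l = \<alpha> *\<^sub>R hat (g x)"
    using gne notint unfolding soc_normal_def by auto
  have xs: "xs = adjoint L l" using assms(3) unfolding Lambda_def L_def by auto
  have "inner xs u = 0" using assms(4) unfolding crit_cone_def by auto
  hence "u \<bullet> adjoint L l = 0" using xs by (simp add: inner_commute)
  hence "L u \<bullet> l = 0" using adjoint_works[OF linL] by simp
  hence "\<alpha> * (- a * p + q \<bullet> b) = 0"
    using al unfolding p_def q_def a_def b_def hat_def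
    by (simp add: inner_Pair inner_prod_def algebra_simps)
  hence crit: "\<alpha> * (- a * p + b \<bullet> q) = 0" by (simp only: inner_commute[of q b])
  have cu: "curv g x l u = (- fst l / a) *\<^sub>R (adjoint (\<lambda>v. snd (L v)) q - adjoint (\<lambda>v. fst (L v)) p)"
    using True unfolding curv_def L_def a_def q_def p_def by simp
  have fl: "- fst l / a = \<alpha>" using al apos unfolding hat_def a_def by simp
  have i1: "u \<bullet> adjoint (\<lambda>v. snd (L v)) q = q \<bullet> q"
    using adjoint_works[OF lin1, of u q] unfolding q_def by simp
  have i2: "u \<bullet> adjoint (\<lambda>v. fst (L v)) p = p * p"
    using adjoint_works[OF lin0, of u p] unfolding p_def by simp
  have val: "inner (curv g x l u) u = \<alpha> * (q \<bullet> q - p * p)"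
  proof -
    have "inner (curv g x l u) u = u \<bullet> curv g x l u" by (rule inner_commute)
    also have "\<dots> = \<alpha> * (u \<bullet> adjoint (\<lambda>v. snd (L v)) q - u \<bullet> adjoint (\<lambda>v. fst (L v)) p)"
      unfolding cu fl by (simp add: inner_diff_right)
    finally show ?thesis using i1 i2 by simp
  qed
  show ?thesis
  proof (cases "\<alpha> = 0")
    case True then show ?thesis using val by simp
  next
    case False
    hence eq: "b \<bullet> q = a * p" using crit by simp
    have "\<bar>a * p\<bar> \<le> norm b * norm q"
      using Cauchy_Schwarz_ineq2[of b q] eq by simp
    hence "a * \<bar>p\<bar> \<le> a * norm q"
      using bnd apos by (simp add: abs_mult)
    hence ab: "\<bar>p\<bar> \<le> norm q" using apos by (simp add: mult_le_cancel_left_pos)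
    have "p * p = \<bar>p\<bar> * \<bar>p\<bar>" by simp
    also have "\<dots> \<le> norm q * norm q" using ab by (intro mult_mono) auto
    also have "\<dots> = q \<bullet> q" by (simp add: power2_norm_eq_inner[symmetric] power2_eq_square)
    finally have "p * p \<le> q \<bullet> q" .
    then show ?thesis using val al by simp
  qed
qed

end
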